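(* Let $\lambda>0$, $\xi>0$, $v_2<v_1$ with either $v_2<0<v_1$ or $0<v_2<v_1$, $q\in[0,1]$, and let $\tilde X(t)$ be the position of the extended telegraph process driven by GCPs with parameter $\lambda$ with Poissonian resets to the origin at rate $\xi$, with $\tilde X(0)=0$ and random initial velocity $V(0)=V_0$ where $P\{V_0=v_1\}=q$, $P\{V_0=v_2\}=1-q$. Then for $t>0$ and $v_2t<x<v_1t$ its (generalized) density $\tilde p(x,t)$ equals $$ \tilde p(x,t)=qH_1(x,t)+(1-q)H_2(x,t)+\mathbb 1_{\{v_2t<x<v_1t\}}\frac{\lambda e^{-\xi t}}{(v_1-v_2)(1+\lambda t)}+\frac{\xi e^{\xi/\lambda}}{v_1-v_2}\boldsymbol I(x,t)\Gamma_\lambda^\xi(x,t), $$ where $H_j(x,t)=\frac{e^{-\xi t}\delta(x-v_jt)}{1+\lambda t}+\mathrm{sgn}(v_j)\mathbb 1_{\{0<\frac{x}{v_j}<t\}}\frac{\xi e^{-\xi x/v_j}}{v_j+\lambda x}$, $j=1,2$.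
   Context: GCP with intensity $\lambda>0$: a Poisson process whose rate is random, exponentially distributed with mean $\lambda$; increments satisfy $P\{\tilde N_\lambda(t+s)-\tilde N_\lambda(t)=k\}=\frac{1}{1+\lambda s}(\frac{\lambda s}{1+\lambda s})^k$. The process: a particle starts at the origin with initial velocity $V(0)$ ($v_1,v_2\neq0$, $v_2<v_1$), moves with velocity alternating between $v_1$ and $v_2$, the periods at velocity $v_1$ and at $v_2$ being governed by two independent GCPs of intensity $\lambda$; additionally it is instantaneously reset to the origin at the epochs of an independent Poisson process of rate $\xi$, restarting afresh with its initial velocity. Conditional on $V(0)=v_j$, the density is $\tilde p(x,t|v_j)=e^{-\xi t}p(x,t|v_j)+\xi\int_0^te^{-\xi s}p(x,s|v_j)ds$, where $p(x,t|v_j)=\frac{\delta(x-v_jt)}{1+\lambda t}+\mathbb 1_{\{v_2t<x<v_1t\}}\frac{\lambda}{(v_1-v_2)(1+\lambda t)}$ ($\delta$ Dirac delta); with random initial velocity, $\tilde p(x,t)=q\tilde p(x,t|v_1)+(1-q)\tilde p(x,t|v_2)$. Notation: $M_x=\max\{x/v_1,x/v_2\}$, $m_{x,t}=\min\{x/v_2,t\}$; $\Gamma(a,z_0,z_1)=\int_{z_0}^{z_1}s^{a-1}e^{-s}ds$; $\Gamma_\lambda^\xi(x,t)=\Gamma[0,(M_x+\frac1\lambda)\xi,(t+\frac1\lambda)\xi]$ if $v_2<0<v_1$, $=\Gamma[0,(\frac x{v_1}+\frac1\lambda)\xi,(m_{x,t}+\frac1\lambda)\xi]$ if $0<v_2<v_1$;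 $\boldsymbol I(x,t)=\mathbb 1_{\{\min\{v_2t,0\}<x<v_1t\}}$. *)

theory Defs
  imports "HOL-Analysis.Analysis"
begin

text \<open>Law of the telegraph process without resets, conditional on V(0) = vj:
  atom of mass 1/(1+lam s) at vj*s plus the uniform part with density
  lam/((v1-v2)(1+lam s)) on the open interval (v2 s, v1 s).\<close>
definition P_cond :: "real \<Rightarrow> real \<Rightarrow> real \<Rightarrow> real \<Rightarrow> real \<Rightarrow> real set \<Rightarrow> real" where
  "P_cond lam v1 v2 vj s A =
     indicator A (vj * s) / (1 + lam * s)
     + (LINT x : A \<inter> {v2 * s <..< v1 * s} | lborel. lam / ((v1 - v2) * (1 + lam * s)))"

text \<open>Law of the process with Poissonian resets at rate xi, conditional on V(0) = vj:
  e^{-xi t} p(.,t|vj) + xi * int_0^t e^{-xi s} p(.,s|vj) ds.\<close>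
definition Ptilde_cond :: "real \<Rightarrow> real \<Rightarrow> real \<Rightarrow> real \<Rightarrow> real \<Rightarrow> real \<Rightarrow> real set \<Rightarrow> real" where
  "Ptilde_cond lam xi v1 v2 vj t A =
     exp (- xi * t) * P_cond lam v1 v2 vj t A
     + xi * (LINT s : {0..t} | lborel. exp (- xi * s) * P_cond lam v1 v2 vj s A)"

definition Ptilde :: "real \<Rightarrow> real \<Rightarrow> real \<Rightarrow> real \<Rightarrow> real \<Rightarrow> real \<Rightarrow> real set \<Rightarrow> real" where
  "Ptilde lam xi v1 v2 q t A =
     q * Ptilde_cond lam xi v1 v2 v1 t A + (1 - q) * Ptilde_cond lam xi v1 v2 v2 t A"

definition Gamma_inc :: "real \<Rightarrow> real \<Rightarrow> real \<Rightarrow> real" where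
  "Gamma_inc a z0 z1 = (LINT s : {z0..z1} | lborel. s powr (a - 1) * exp (- s))"

definition M_x :: "real \<Rightarrow> real \<Rightarrow> real \<Rightarrow> real" where
  "M_x v1 v2 x = max (x / v1) (x / v2)"

definition m_xt :: "real \<Rightarrow> real \<Rightarrow> real \<Rightarrow> real" where
  "m_xt v2 x t = min (x / v2) t"

definition Gamma_lam_xi :: "real \<Rightarrow> real \<Rightarrow> real \<Rightarrow> real \<Rightarrow> real \<Rightarrow> real \<Rightarrow> real" where
  "Gamma_lam_xi lam xi v1 v2 x t =
     (if v2 < 0 \<and> 0 < v1
      then Gamma_inc 0 ((M_x v1 v2 x + 1 / lam) * xi) ((t + 1 / lam) * xi)
      else Gamma_inc 0 ((x / v1 + 1 / lam) * xi) ((m_xt v2 x t + 1 / lam) * xi))"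

definition I_set :: "real \<Rightarrow> real \<Rightarrow> real \<Rightarrow> real set" where
  "I_set v1 v2 t = {min (v2 * t) 0 <..< v1 * t}"

text \<open>Absolutely continuous (non-delta) part of H_j(x,t).\<close>
definition H_ac :: "real \<Rightarrow> real \<Rightarrow> real \<Rightarrow> real \<Rightarrow> real \<Rightarrow> real" where
  "H_ac lam xi vj x t =
     sgn vj * indicator {y. 0 < y / vj \<and> y / vj < t} x * (xi * exp (- xi * x / vj) / (vj + lam * x))"

text \<open>Weight of the Dirac delta at vj*t in H_j(x,t).\<close>
definition H_atom :: "real \<Rightarrow> real \<Rightarrow> real \<Rightarrow> real" where
  "H_atom lam xi t = exp (- xi * t) / (1 + lam * t)"

text \<open>Absolutely continuous part of the generalised density p~(x,t).\<close>
definition ptilde_ac :: "real \<Rightarrow> real \<Rightarrow> real \<Rightarrow> real \<Rightarrow> real \<Rightarrow> real \<Rightarrow> real \<Rightarrow> real" where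
  "ptilde_ac lam xi v1 v2 q x t =
     q * H_ac lam xi v1 x t + (1 - q) * H_ac lam xi v2 x t
     + indicator {v2 * t <..< v1 * t} x * (lam * exp (- xi * t) / ((v1 - v2) * (1 + lam * t)))
     + xi * exp (xi / lam) / (v1 - v2) * indicator (I_set v1 v2 t) x * Gamma_lam_xi lam xi v1 v2 x t"

end

theory Submission
  imports Defs
begin

lemma integrable_bdd:
  fixes f :: "real \<Rightarrow> real"
  assumes [measurable]: "f \<in> borel_measurable borel" and b: "\<And>x. \<bar>f x\<bar> \<le> K * indicator {a..b} x"
  shows "integrable lborel f"
proof (rule Bochner_Integration.integrable_bound[of lborel "\<lambda>x. K * indicator {a..b} x"])
  show "integrable lborel (\<lambda>x. K * indicator {a..b} x)"
    using borel_integrable_compact[of "{a..b}" "\<lambda>_. K"] by (simp add: mult.commute)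
  show "f \<in> borel_measurable lborel" by simp
  show "AE x in lborel. norm (f x) \<le> norm (K * indicator {a..b} x)"
    by (auto intro!: AE_I2 order_trans[OF b abs_ge_self])
qed

lemma integrable_bdd2:
  fixes f :: "real \<times> real \<Rightarrow> real"
  assumes [measurable]: "f \<in> borel_measurable (lborel \<Otimes>\<^sub>M lborel)" and b: "\<And>x. \<bar>f x\<bar> \<le> K * indicator ({a..b} \<times> {c..d}) x"
  shows "integrable (lborel \<Otimes>\<^sub>M lborel) f"
proof (rule Bochner_Integration.integrable_bound[of _ "\<lambda>x. K * indicator ({a..b} \<times> {c..d}) x"])
  have "emeasure (lborel \<Otimes>\<^sub>M lborel) ({a..b} \<times> {c..d}) < \<infinity>"
    by (subst lborel.emeasure_pair_measure_Times) (auto simp: ennreal_mult_less_top emeasure_lborel_Icc_eq)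
  then have "integrable (lborel \<Otimes>\<^sub>M lborel) (indicator ({a..b} \<times> {c..d}) :: _ \<Rightarrow> real)"
    by (intro integrable_real_indicator) auto
  then show "integrable (lborel \<Otimes>\<^sub>M lborel) (\<lambda>x. K * indicator ({a..b} \<times> {c..d}) x)"
    by simp
  show "f \<in> borel_measurable (lborel \<Otimes>\<^sub>M lborel)" by simp
  show "AE x in lborel \<Otimes>\<^sub>M lborel. norm (f x) \<le> norm (K * indicator ({a..b} \<times> {c..d}) x)"
    by (auto intro!: AE_I2 order_trans[OF b abs_ge_self])
qed

lemma gamma_cv:
  fixes lam xi lo hi :: real
  assumes lam: "lam > 0" and xi: "xi > 0" and lo: "0 \<le> lo"
  shows "(\<integral>s. indicator {lo..hi} s * (exp (- xi * s) / (1 + lam * s)) \<partial>lborel)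
         = exp (xi / lam) / lam * Gamma_inc 0 ((lo + 1 / lam) * xi) ((hi + 1 / lam) * xi)"
proof -
  define z0 where "z0 = (lo + 1 / lam) * xi"
  define z1 where "z1 = (hi + 1 / lam) * xi"
  have "Gamma_inc 0 z0 z1 = (\<integral>u. indicator {z0..z1} u * (u powr (0 - 1) * exp (- u)) \<partial>lborel)"
    unfolding Gamma_inc_def set_lebesgue_integral_def by simp
  also have "\<dots> = \<bar>xi\<bar> *\<^sub>R (\<integral>s. indicator {z0..z1} (xi / lam + xi * s) * ((xi / lam + xi * s) powr (0 - 1) * exp (- (xi / lam + xi * s))) \<partial>lborel)"
    by (rule lborel_integral_real_affine) (use xi in simp)
  also have "\<dots> = (\<integral>s. lam * exp (- xi / lam) * (indicator {lo..hi} s * (exp (- xi * s) / (1 + lam * s))) \<partial>lborel)"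
  proof -
    have eq: "xi * (indicator {z0..z1} (xi / lam + xi * s) * ((xi / lam + xi * s) powr (0 - 1) * exp (- (xi / lam + xi * s))))
        = lam * exp (- xi / lam) * (indicator {lo..hi} s * (exp (- xi * s) / (1 + lam * s)))" for s
    proof -
      have ind: "indicator {z0..z1} (xi / lam + xi * s) = (indicator {lo..hi} s :: real)"
      proof -
        have "z0 \<le> xi / lam + xi * s \<longleftrightarrow> lo \<le> s"
          unfolding z0_def using xi lam by (simp add: algebra_simps)
        moreover have "xi / lam + xi * s \<le> z1 \<longleftrightarrow> s \<le> hi"
          unfolding z1_def using xi lam by (simp add: algebra_simps)
        ultimately show ?thesis by (simp add: indicator_def)
      qed
      show ?thesis
      proof (cases "lo \<le> s \<and> s \<le> hi")
        case True
        then have s0: "0 \<le> s" using lo by simp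
        have pos: "xi / lam + xi * s > 0" using xi lam s0 by (simp add: add_pos_nonneg)
        have p: "(xi / lam + xi * s) powr (0 - 1) = 1 / (xi / lam + xi * s)"
          using pos by (simp add: powr_minus_divide)
        have e: "exp (- (xi / lam + xi * s)) = exp (- xi / lam) * exp (- xi * s)"
          by (simp add: exp_add[symmetric])
        have d: "xi / lam + xi * s = xi * (1 + lam * s) / lam" using lam by (simp add: field_simps)
        have pos1: "1 + lam * s > 0" using lam s0 by (simp add: add_pos_nonneg)
        then have "xi * (1 + lam * s) > 0" using xi by simp
        moreover have "xi + lam * (s * xi) = xi * (1 + lam * s)" by (simp add: algebra_simps)
        ultimately have nz: "xi + lam * (s * xi) \<noteq> 0" by (metis less_irrefl)
        show ?thesis using True xi lam nz pos1
          apply (subst ind, subst p, subst e, subst d)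
          by (simp add: indicator_def field_simps)
      next
        case False
        then show ?thesis by (subst ind) (auto simp: indicator_def)
      qed
    qed
    show ?thesis
      apply (simp only: real_scaleR_def abs_of_pos[OF xi])
      apply (subst integral_mult_right_zero[symmetric])
      apply (rule Bochner_Integration.integral_cong[OF refl])
      by (rule eq)
  qed
  also have "\<dots> = lam * exp (- xi / lam) * (\<integral>s. indicator {lo..hi} s * (exp (- xi * s) / (1 + lam * s)) \<partial>lborel)"
    by (rule integral_mult_right_zero)
  finally show ?thesis unfolding z0_def[symmetric] z1_def[symmetric] using lam
    by (simp add: field_simps exp_minus)
qed


lemma bnd1:
  fixes lam xi s c :: real
  assumes "lam > 0" "xi > 0" "0 \<le> s" "0 \<le> c" "c \<le> 1"
  shows "\<bar>exp (- xi * s) * (c / (1 + lam * s))\<bar> \<le> 1"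
proof -
  have e: "exp (- xi * s) \<le> 1" using assms by simp
  have d: "1 \<le> 1 + lam * s" using assms by simp
  have "c \<le> 1 + lam * s" using assms d by linarith
  then have "c / (1 + lam * s) \<le> 1" using d by (simp add: divide_le_eq)
  moreover have "0 \<le> c / (1 + lam * s)" using assms d by simp
  ultimately have "exp (- xi * s) * (c / (1 + lam * s)) \<le> 1 * 1"
    using e by (intro mult_mono) auto
  moreover have nn: "0 \<le> exp (- xi * s) * (c / (1 + lam * s))"
    using \<open>0 \<le> c / (1 + lam * s)\<close> by (rule mult_nonneg_nonneg[rotated]) simp
  ultimately show ?thesis by (simp only: abs_of_nonneg[OF nn])
qed

lemma bnd1':
  fixes lam xi s c :: real
  assumes "lam > 0" "xi > 0" "0 \<le> s" "0 \<le> c" "c \<le> 1"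
  shows "\<bar>xi * (exp (- xi * s) * (c / (1 + lam * s)))\<bar> \<le> xi"
proof -
  have "\<bar>xi * (exp (- xi * s) * (c / (1 + lam * s)))\<bar> = xi * \<bar>exp (- xi * s) * (c / (1 + lam * s))\<bar>"
    using assms by (simp only: abs_mult)
  also have "\<dots> \<le> xi * 1" by (rule mult_left_mono[OF bnd1[OF assms]]) (use assms in simp)
  finally show ?thesis by simp
qed

lemma atom_part:
  fixes lam xi vj t :: real and A :: "real set"
  assumes lam: "lam > 0" and xi: "xi > 0" and vj: "vj \<noteq> 0" and t: "t > 0"
    and A[measurable]: "A \<in> sets borel"
  shows "integrable lborel (\<lambda>s. indicator {0..t} s * (exp (- xi * s) * (indicator A (vj * s) / (1 + lam * s))))"
    and "integrable lborel (\<lambda>x. indicator A x * H_ac lam xi vj x t)"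
    and "xi * (\<integral>s. indicator {0..t} s * (exp (- xi * s) * (indicator A (vj * s) / (1 + lam * s))) \<partial>lborel)
         = (\<integral>x. indicator A x * H_ac lam xi vj x t \<partial>lborel)"
proof -
  define f where "f x = indicator A x * H_ac lam xi vj x t" for x
  define h where "h s = indicator {0<..<t} s * (xi * (exp (- xi * s) * (indicator A (vj * s) / (1 + lam * s))))" for s
  define g where "g s = indicator {0..t} s * (exp (- xi * s) * (indicator A (vj * s) / (1 + lam * s)))" for s
  have fh: "\<bar>vj\<bar> * f (0 + vj * s) = h s" for s
  proof (cases "0 < s \<and> s < t")
    case True
    have p: "1 + lam * s > 0" using True lam by (simp add: add_pos_nonneg)
    have i: "indicator {y. 0 < y / vj \<and> y / vj < t} (vj * s) = (1::real)"
      using True vj by (simp add: indicator_def)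
    have sv: "\<bar>vj\<bar> * sgn vj = vj" by (simp add: abs_mult_sgn)
    have "vj + lam * (s * vj) = vj * (1 + lam * s)" by (simp add: algebra_simps)
    then have nz: "vj + lam * (s * vj) \<noteq> 0" using vj p by simp
    have "\<bar>vj\<bar> * f (0 + vj * s) = (\<bar>vj\<bar> * sgn vj) * indicator A (vj * s) * (xi * exp (- xi * s) / (vj * (1 + lam * s)))"
      unfolding f_def H_ac_def add_0_left i using vj by (simp add: algebra_simps)
    also have "\<dots> = h s" unfolding sv h_def using True vj p nz by (simp add: field_simps indicator_def)
    finally show ?thesis .
  next
    case False
    have i: "indicator {y. 0 < y / vj \<and> y / vj < t} (vj * s) = (0::real)"
      using False vj by (simp add: indicator_def)
    show ?thesis unfolding f_def H_ac_def h_def add_0_left i using False by (simp add: indicator_def)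
  qed
  have [measurable]: "g \<in> borel_measurable borel" "h \<in> borel_measurable borel"
    unfolding g_def h_def by measurable
  have ig: "integrable lborel g"
  proof (rule integrable_bdd[where K=1 and a=0 and b=t])
    show "g \<in> borel_measurable borel" by measurable
    fix s show "\<bar>g s\<bar> \<le> 1 * indicator {0..t} s"
      unfolding g_def using bnd1[OF lam xi, of s "indicator A (vj * s)"]
      by (auto simp: indicator_def abs_mult)
  qed
  have ih: "integrable lborel h"
  proof (rule integrable_bdd[where K=xi and a=0 and b=t])
    show "h \<in> borel_measurable borel" by measurable
    fix s show "\<bar>h s\<bar> \<le> xi * indicator {0..t} s"
    proof (cases "0 < s \<and> s < t")
      case True
      have "\<bar>xi * (exp (- xi * s) * (indicator A (vj * s) / (1 + lam * s)))\<bar> \<le> xi"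
        by (rule bnd1'[OF lam xi]) (use True in \<open>auto simp: indicator_def\<close>)
      then show ?thesis unfolding h_def using True by (simp add: indicator_def)
    qed (use xi in \<open>auto simp: h_def indicator_def\<close>)
  qed
  have ae: "AE s in lborel. xi * g s = h s"
    using AE_lborel_singleton[of 0] AE_lborel_singleton[of t]
    by eventually_elim (auto simp: g_def h_def indicator_def)
  have hf: "(\<lambda>s. f (0 + vj * s)) = (\<lambda>s. h s / \<bar>vj\<bar>)"
    using fh vj by (auto simp: field_simps)
  have if': "integrable lborel f"
    using lborel_integrable_real_affine_iff[OF vj, of f 0] ih unfolding hf by simp
  have "(\<integral>x. f x \<partial>lborel) = \<bar>vj\<bar> *\<^sub>R (\<integral>s. f (0 + vj * s) \<partial>lborel)"
    by (rule lborel_integral_real_affine[OF vj])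
  also have "\<dots> = (\<integral>s. h s \<partial>lborel)"
    by (simp flip: fh integral_mult_right_zero)
  also have "\<dots> = (\<integral>s. xi * g s \<partial>lborel)"
    by (rule integral_cong_AE) (use ae in \<open>auto elim: AE_mp\<close>)
  also have "\<dots> = xi * (\<integral>s. g s \<partial>lborel)" by simp
  finally show "xi * (\<integral>s. indicator {0..t} s * (exp (- xi * s) * (indicator A (vj * s) / (1 + lam * s))) \<partial>lborel)
         = (\<integral>x. indicator A x * H_ac lam xi vj x t \<partial>lborel)" unfolding f_def g_def by simp
  show "integrable lborel (\<lambda>s. indicator {0..t} s * (exp (- xi * s) * (indicator A (vj * s) / (1 + lam * s))))"
    using ig unfolding g_def .
  show "integrable lborel (\<lambda>x. indicator A x * H_ac lam xi vj x t)" using if' unfolding f_def .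
qed


lemma ind_ioo_measurable[measurable]:
  fixes f g h :: "'a \<Rightarrow> real"
  assumes [measurable]: "f \<in> borel_measurable M" "g \<in> borel_measurable M" "h \<in> borel_measurable M"
  shows "(\<lambda>w. indicator {f w <..< g w} (h w) :: real) \<in> borel_measurable M"
proof -
  have "(\<lambda>w. indicator {f w <..< g w} (h w) :: real) = (\<lambda>w. if f w < h w \<and> h w < g w then 1 else 0)"
    by (auto simp: indicator_def)
  also have "\<dots> \<in> borel_measurable M" by measurable
  finally show ?thesis .
qed

lemma inner_K:
  fixes lam xi v1 v2 t x :: real
  assumes lam: "lam > 0" and xi: "xi > 0" and v: "v2 < v1"
    and cs: "(v2 < 0 \<and> 0 < v1) \<or> 0 < v2" and t: "t > 0"
  shows "(\<integral>s. indicator {0..t} s * indicator {v2 * s <..< v1 * s} x * (exp (- xi * s) / (1 + lam * s)) \<partial>lborel)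
       = exp (xi / lam) / lam * indicator (I_set v1 v2 t) x * Gamma_lam_xi lam xi v1 v2 x t"
proof (cases "x \<in> I_set v1 v2 t")
  case False
  have "indicator {0..t} s * indicator {v2 * s <..< v1 * s} x = (0::real)" for s
  proof (rule ccontr)
    assume "indicator {0..t} s * indicator {v2 * s <..< v1 * s} x \<noteq> (0::real)"
    then have s: "0 \<le> s" "s \<le> t" "v2 * s < x" "x < v1 * s" by (auto simp: indicator_def split: if_splits)
    have "v1 * s \<le> v1 * t" using s v cs by (intro mult_left_mono) auto
    moreover have "min (v2 * t) 0 \<le> v2 * s"
    proof (cases "v2 < 0")
      case True
      have "v2 * t \<le> v2 * s" using True s by (intro mult_left_mono_neg) auto
      then show ?thesis by (simp add: min_le_iff_disj)
    next
      case False
      then have "0 \<le> v2 * s" using s by simp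
      then show ?thesis by (simp add: min_le_iff_disj)
    qed
    ultimately have "x \<in> I_set v1 v2 t" using s t cs unfolding I_set_def by auto
    then show False using False by simp
  qed
  then have eq: "(\<lambda>s. indicator {0..t} s * indicator {v2 * s <..< v1 * s} x * (exp (- xi * s) / (1 + lam * s))) = (\<lambda>s. 0::real)"
    by (intro ext) (metis mult_zero_left)
  show ?thesis using False by (subst eq) simp
next
  case True
  define lo where "lo = (if v2 < 0 \<and> 0 < v1 then M_x v1 v2 x else x / v1)"
  define hi where "hi = (if v2 < 0 \<and> 0 < v1 then t else m_xt v2 x t)"
  have lo0: "0 \<le> lo"
  proof (cases "v2 < 0 \<and> 0 < v1")
    case c1: True
    show ?thesis
    proof (cases "0 \<le> x")
      case True then have "0 \<le> x / v1" using c1 by simp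
      then show ?thesis using c1 unfolding lo_def M_x_def by simp
    next
      case False then have "0 \<le> x / v2" using c1 by (simp add: divide_nonpos_neg)
      then show ?thesis using c1 unfolding lo_def M_x_def by simp
    qed
  next
    case c2: False
    then have "0 < v2" "0 < v1" using cs v by auto
    then have "min (v2 * t) 0 = 0" using t by simp
    then have "0 < x" using True unfolding I_set_def by simp
    then show ?thesis using c2 \<open>0 < v1\<close> unfolding lo_def by simp
  qed
  have G: "Gamma_lam_xi lam xi v1 v2 x t = Gamma_inc 0 ((lo + 1 / lam) * xi) ((hi + 1 / lam) * xi)"
    unfolding Gamma_lam_xi_def lo_def hi_def by simp
  have ae: "AE s in lborel. indicator {0..t} s * indicator {v2 * s <..< v1 * s} x = (indicator {lo..hi} s :: real)"
    using AE_lborel_singleton[of lo] AE_lborel_singleton[of "x / v2"]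
  proof eventually_elim
    case (elim s)
    show ?case
    proof (cases "v2 < 0 \<and> 0 < v1")
      case c1: True
      have f1: "v2 * s < x \<longleftrightarrow> x / v2 < s" using c1 by (simp add: neg_divide_less_eq mult.commute)
      have f2: "x < v1 * s \<longleftrightarrow> x / v1 < s" using c1 by (simp add: pos_divide_less_eq mult.commute)
      have l: "lo = max (x / v1) (x / v2)" "hi = t" using c1 unfolding lo_def hi_def M_x_def by auto
      show ?thesis using lo0 elim unfolding l indicator_def
        by (auto simp: f1 f2 max_def split: if_splits)
    next
      case c2: False
      then have v2p: "0 < v2" and v1p: "0 < v1" using cs v by auto
      have f1: "v2 * s < x \<longleftrightarrow> s < x / v2" using v2p by (simp add: pos_less_divide_eq mult.commute)
      have f2: "x < v1 * s \<longleftrightarrow> x / v1 < s" using v1p by (simp add: pos_divide_less_eq mult.commute)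
      have l: "lo = x / v1" "hi = min (x / v2) t" using c2 unfolding lo_def hi_def m_xt_def by auto
      show ?thesis using lo0 elim unfolding l indicator_def
        by (auto simp: f1 f2 min_def)
    qed
  qed
  have "(\<integral>s. indicator {0..t} s * indicator {v2 * s <..< v1 * s} x * (exp (- xi * s) / (1 + lam * s)) \<partial>lborel)
      = (\<integral>s. indicator {lo..hi} s * (exp (- xi * s) / (1 + lam * s)) \<partial>lborel)"
    by (rule integral_cong_AE) (use ae in \<open>auto elim!: AE_mp\<close>)
  also have "\<dots> = exp (xi / lam) / lam * Gamma_inc 0 ((lo + 1 / lam) * xi) ((hi + 1 / lam) * xi)"
    by (rule gamma_cv[OF lam xi lo0])
  finally show ?thesis using True G by simp
qed


lemma unif_part:
  fixes lam xi v1 v2 t :: real and A :: "real set"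
  assumes lam: "lam > 0" and xi: "xi > 0" and v: "v2 < v1"
    and cs: "(v2 < 0 \<and> 0 < v1) \<or> 0 < v2" and t: "t > 0"
    and A[measurable]: "A \<in> sets borel" and At: "A \<subseteq> {v2 * t .. v1 * t}"
  shows "integrable lborel (\<lambda>s. indicator {0..t} s * (exp (- xi * s) *
            (\<integral>x. indicator (A \<inter> {v2 * s <..< v1 * s}) x * (lam / ((v1 - v2) * (1 + lam * s))) \<partial>lborel)))"
    and "integrable lborel (\<lambda>x. indicator A x * (xi * exp (xi / lam) / (v1 - v2) * indicator (I_set v1 v2 t) x * Gamma_lam_xi lam xi v1 v2 x t))"
    and "xi * (\<integral>s. indicator {0..t} s * (exp (- xi * s) *
            (\<integral>x. indicator (A \<inter> {v2 * s <..< v1 * s}) x * (lam / ((v1 - v2) * (1 + lam * s))) \<partial>lborel)) \<partial>lborel)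
         = (\<integral>x. indicator A x * (xi * exp (xi / lam) / (v1 - v2) * indicator (I_set v1 v2 t) x * Gamma_lam_xi lam xi v1 v2 x t) \<partial>lborel)"
proof -
  define F where "F s x = lam / (v1 - v2) * (indicator A x * (indicator {0..t} s * indicator {v2 * s <..< v1 * s} x * (exp (- xi * s) / (1 + lam * s))))" for s x :: real
  have Fm[measurable]: "(\<lambda>(s, x). F s x) \<in> borel_measurable (lborel \<Otimes>\<^sub>M lborel)"
    unfolding F_def by measurable
  have Fi: "integrable (lborel \<Otimes>\<^sub>M lborel) (\<lambda>(s, x). F s x)"
  proof (rule integrable_bdd2[where K="lam / (v1 - v2)" and a=0 and b=t and c="v2 * t" and d="v1 * t"])
    show "(\<lambda>(s, x). F s x) \<in> borel_measurable (lborel \<Otimes>\<^sub>M lborel)" by (rule Fm)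
    fix p :: "real \<times> real"
    obtain s x where p: "p = (s, x)" by (cases p)
    show "\<bar>(case p of (s, x) \<Rightarrow> F s x)\<bar> \<le> lam / (v1 - v2) * indicator ({0..t} \<times> {v2 * t..v1 * t}) p"
    proof (cases "x \<in> A \<and> 0 \<le> s \<and> s \<le> t")
      case True
      have xA: "x \<in> {v2 * t..v1 * t}" using At True by auto
      have b: "\<bar>exp (- xi * s) * (indicator {v2 * s <..< v1 * s} x / (1 + lam * s))\<bar> \<le> 1"
        by (rule bnd1[OF lam xi]) (use True in \<open>auto simp: indicator_def\<close>)
      have k: "lam / (v1 - v2) > 0" using lam v by simp
      have "\<bar>F s x\<bar> = lam / (v1 - v2) * \<bar>exp (- xi * s) * (indicator {v2 * s <..< v1 * s} x / (1 + lam * s))\<bar>"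
        unfolding F_def using True k lam v by (simp add: abs_mult indicator_def)
      also have "\<dots> \<le> lam / (v1 - v2) * 1" using b k by (intro mult_left_mono) auto
      finally show ?thesis using p True xA by (simp add: indicator_def)
    next
      case False
      then have "F s x = 0" unfolding F_def by (auto simp: indicator_def)
      then show ?thesis using p lam v by (simp add: indicator_def)
    qed
  qed
  have eq1: "(\<integral>x. F s x \<partial>lborel) = indicator {0..t} s * (exp (- xi * s) *
            (\<integral>x. indicator (A \<inter> {v2 * s <..< v1 * s}) x * (lam / ((v1 - v2) * (1 + lam * s))) \<partial>lborel))" for s
  proof -
    have "(\<lambda>x. F s x) = (\<lambda>x. (indicator {0..t} s * exp (- xi * s)) * (indicator (A \<inter> {v2 * s <..< v1 * s}) x * (lam / ((v1 - v2) * (1 + lam * s)))))"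
      unfolding F_def by (auto simp: indicator_def)
    then show ?thesis by simp
  qed
  have eq2: "xi * (\<integral>s. F s x \<partial>lborel) = indicator A x * (xi * exp (xi / lam) / (v1 - v2) * indicator (I_set v1 v2 t) x * Gamma_lam_xi lam xi v1 v2 x t)" for x
  proof -
    have "(\<integral>s. F s x \<partial>lborel) = lam / (v1 - v2) * indicator A x * (\<integral>s. indicator {0..t} s * indicator {v2 * s <..< v1 * s} x * (exp (- xi * s) / (1 + lam * s)) \<partial>lborel)"
      unfolding F_def integral_mult_right_zero by (simp only: mult.assoc)
    also have "\<dots> = lam / (v1 - v2) * indicator A x * (exp (xi / lam) / lam * indicator (I_set v1 v2 t) x * Gamma_lam_xi lam xi v1 v2 x t)"
      by (subst inner_K[OF lam xi v cs t]) simp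
    finally show ?thesis using lam by simp
  qed
  show "integrable lborel (\<lambda>s. indicator {0..t} s * (exp (- xi * s) *
            (\<integral>x. indicator (A \<inter> {v2 * s <..< v1 * s}) x * (lam / ((v1 - v2) * (1 + lam * s))) \<partial>lborel)))"
    using lborel_pair.integrable_fst[OF Fi] unfolding eq1 .
  have "integrable lborel (\<lambda>x. xi * (\<integral>s. F s x \<partial>lborel))"
    using lborel_pair.integrable_snd[OF Fi] by simp
  then show "integrable lborel (\<lambda>x. indicator A x * (xi * exp (xi / lam) / (v1 - v2) * indicator (I_set v1 v2 t) x * Gamma_lam_xi lam xi v1 v2 x t))"
    unfolding eq2 .
  have "xi * (\<integral>s. indicator {0..t} s * (exp (- xi * s) *
            (\<integral>x. indicator (A \<inter> {v2 * s <..< v1 * s}) x * (lam / ((v1 - v2) * (1 + lam * s))) \<partial>lborel)) \<partial>lborel)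
      = xi * (\<integral>s. \<integral>x. F s x \<partial>lborel \<partial>lborel)" unfolding eq1 ..
  also have "\<dots> = xi * (\<integral>x. \<integral>s. F s x \<partial>lborel \<partial>lborel)"
    using lborel_pair.Fubini_integral[OF Fi] by simp
  also have "\<dots> = (\<integral>x. xi * (\<integral>s. F s x \<partial>lborel) \<partial>lborel)" by simp
  also have "\<dots> = (\<integral>x. indicator A x * (xi * exp (xi / lam) / (v1 - v2) * indicator (I_set v1 v2 t) x * Gamma_lam_xi lam xi v1 v2 x t) \<partial>lborel)"
    unfolding eq2 ..
  finally show "xi * (\<integral>s. indicator {0..t} s * (exp (- xi * s) *
            (\<integral>x. indicator (A \<inter> {v2 * s <..< v1 * s}) x * (lam / ((v1 - v2) * (1 + lam * s))) \<partial>lborel)) \<partial>lborel)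
         = (\<integral>x. indicator A x * (xi * exp (xi / lam) / (v1 - v2) * indicator (I_set v1 v2 t) x * Gamma_lam_xi lam xi v1 v2 x t) \<partial>lborel)" .
qed


theorem theorem3:
  fixes lam xi v1 v2 q t :: real and A :: "real set"
  assumes "lam > 0" and "xi > 0" and "v2 < v1"
    and "(v2 < 0 \<and> 0 < v1) \<or> 0 < v2"
    and "0 \<le> q" and "q \<le> 1"
    and "t > 0"
    and "A \<in> sets borel" and "A \<subseteq> {v2 * t .. v1 * t}"
  shows "Ptilde lam xi v1 v2 q t A =
           q * H_atom lam xi t * indicator A (v1 * t)
         + (1 - q) * H_atom lam xi t * indicator A (v2 * t)
         + (LINT x : A | lborel. ptilde_ac lam xi v1 v2 q x t)"
proof -
  note lam = assms(1) and xi = assms(2) and v = assms(3) and cs = assms(4) and t = assms(7)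
    and A = assms(8) and At = assms(9)
  note [measurable] = A
  have v1nz: "v1 \<noteq> 0" and v2nz: "v2 \<noteq> 0" using cs v by auto
  define U where "U s = (\<integral>x. indicator (A \<inter> {v2 * s <..< v1 * s}) x * (lam / ((v1 - v2) * (1 + lam * s))) \<partial>lborel)" for s
  define a where "a vj s = indicator A (vj * s) / (1 + lam * s)" for vj s :: real
  define Gp where "Gp x = indicator A x * (xi * exp (xi / lam) / (v1 - v2) * indicator (I_set v1 v2 t) x * Gamma_lam_xi lam xi v1 v2 x t)" for x
  define Hp where "Hp vj x = indicator A x * H_ac lam xi vj x t" for vj x
  define Tp where "Tp x = indicator A x * (indicator {v2 * t <..< v1 * t} x * (lam * exp (- xi * t) / ((v1 - v2) * (1 + lam * t))))" for x
  note UP = unif_part[OF lam xi v cs t A At, folded U_def Gp_def]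
  have PC: "P_cond lam v1 v2 vj s A = a vj s + U s" for vj s
    unfolding P_cond_def set_lebesgue_integral_def a_def U_def by simp
  have Tint: "integrable lborel Tp"
  proof (rule integrable_bdd[where K="lam * exp (- xi * t) / ((v1 - v2) * (1 + lam * t))" and a="v2 * t" and b="v1 * t"])
    show "Tp \<in> borel_measurable borel" unfolding Tp_def by measurable
    fix x show "\<bar>Tp x\<bar> \<le> lam * exp (- xi * t) / ((v1 - v2) * (1 + lam * t)) * indicator {v2 * t..v1 * t} x"
      using lam v t At by (auto simp: Tp_def indicator_def)
  qed
  have TU: "exp (- xi * t) * U t = (\<integral>x. Tp x \<partial>lborel)"
  proof -
    have "(\<lambda>x. Tp x) = (\<lambda>x. exp (- xi * t) * (indicator (A \<inter> {v2 * t <..< v1 * t}) x * (lam / ((v1 - v2) * (1 + lam * t)))))"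
      by (auto simp: Tp_def indicator_def)
    then show ?thesis unfolding U_def by simp
  qed
  have PCj: "Ptilde_cond lam xi v1 v2 vj t A = exp (- xi * t) * a vj t + (\<integral>x. Tp x \<partial>lborel) + (\<integral>x. Hp vj x \<partial>lborel) + (\<integral>x. Gp x \<partial>lborel)"
    if vj: "vj \<noteq> 0" for vj
  proof -
    note AP = atom_part[OF lam xi vj t A, folded a_def Hp_def]
    have "(\<integral>s. indicator {0..t} s * (exp (- xi * s) * (a vj s + U s)) \<partial>lborel)
        = (\<integral>s. indicator {0..t} s * (exp (- xi * s) * a vj s) + indicator {0..t} s * (exp (- xi * s) * U s) \<partial>lborel)"
      by (simp add: algebra_simps)
    also have "\<dots> = (\<integral>s. indicator {0..t} s * (exp (- xi * s) * a vj s) \<partial>lborel) + (\<integral>s. indicator {0..t} s * (exp (- xi * s) * U s) \<partial>lborel)"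
      by (rule Bochner_Integration.integral_add) (use AP(1) UP(1) in auto)
    finally have "xi * (\<integral>s. indicator {0..t} s * (exp (- xi * s) * (a vj s + U s)) \<partial>lborel)
        = (\<integral>x. Hp vj x \<partial>lborel) + (\<integral>x. Gp x \<partial>lborel)"
      using AP(3) UP(3) by (simp add: distrib_left)
    then show ?thesis
      unfolding Ptilde_cond_def PC set_lebesgue_integral_def TU[symmetric]
      by (simp add: distrib_left)
  qed
  have RHS: "(LINT x : A | lborel. ptilde_ac lam xi v1 v2 q x t)
      = q * (\<integral>x. Hp v1 x \<partial>lborel) + (1 - q) * (\<integral>x. Hp v2 x \<partial>lborel) + (\<integral>x. Tp x \<partial>lborel) + (\<integral>x. Gp x \<partial>lborel)"
  proof -
    note H1 = atom_part(2)[OF lam xi v1nz t A, folded Hp_def]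
    note H2 = atom_part(2)[OF lam xi v2nz t A, folded Hp_def]
    have "(LINT x : A | lborel. ptilde_ac lam xi v1 v2 q x t)
        = (\<integral>x. q * Hp v1 x + (1 - q) * Hp v2 x + Tp x + Gp x \<partial>lborel)"
      unfolding set_lebesgue_integral_def ptilde_ac_def Hp_def Tp_def Gp_def
      by (rule Bochner_Integration.integral_cong) (auto simp: algebra_simps)
    also have "\<dots> = (\<integral>x. q * Hp v1 x + (1 - q) * Hp v2 x + Tp x \<partial>lborel) + (\<integral>x. Gp x \<partial>lborel)"
      by (rule Bochner_Integration.integral_add) (use H1 H2 Tint UP(2) in auto)
    also have "(\<integral>x. q * Hp v1 x + (1 - q) * Hp v2 x + Tp x \<partial>lborel) = (\<integral>x. q * Hp v1 x + (1 - q) * Hp v2 x \<partial>lborel) + (\<integral>x. Tp x \<partial>lborel)"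
      by (rule Bochner_Integration.integral_add) (use H1 H2 Tint in auto)
    also have "(\<integral>x. q * Hp v1 x + (1 - q) * Hp v2 x \<partial>lborel) = (\<integral>x. q * Hp v1 x \<partial>lborel) + (\<integral>x. (1 - q) * Hp v2 x \<partial>lborel)"
      by (rule Bochner_Integration.integral_add) (use H1 H2 in auto)
    finally show ?thesis by simp
  qed
  show ?thesis
    unfolding Ptilde_def RHS PCj[OF v1nz] PCj[OF v2nz]
    by (simp add: a_def H_atom_def algebra_simps)
qed

end
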